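(* Fix $n\in\mathbb N$, a noise level $\varepsilon\in[0,1)$, a horizon $K$ and a target risk level $\bar q\in[0,1]$. Let $G=(\mathcal V,\mathcal E)$ be a graph with $|\mathcal V|=n$ and minimum degree $\underline\Delta_G=\min_v|\mathcal N(v)|$. Under the Water-Filling Strategy $\psi^{wf}_{\bar q}$, $$\mathbb P(T_{IH}\ne T)\le1-\left(1-\frac1{\underline\Delta_G}\right)^K.$$
   Context: Model: finite connected undirected graph, neighborhoods $\mathcal N(v)$; goal $D$ uniform; fixed initial vertex; $B_t$ i.i.d. Bernoulli$(1-\varepsilon)$. The agent in state $X_t$ chooses $a_t\in\mathcal N(X_t)$; if $B_t=1$, $X_{t+1}=a_t$, else uniform on $\mathcal N(X_t)$. $T=\inf\{t\ge1:X_t=D\}$; if not reached by $K$, set $X_{K+1}=D$, $B_K=1$. Random-Step: $a_t$ uniform on $\mathcal N(X_t)$; Goal-Attempt: $a_t=D$ (only if $D\in\mathcal N(X_t)$). $T_{IH}=\inf\{t\ge1:$ Goal-Attempt at $t-1$ and $B_{t-1}=1\}$ ($\le K+1$). $L(t)=\sum_{s\le t}\mathbb I(X_s\in\mathcal N(D))$. Water-Filling Strategy $\psi^{wf}_{\bar q}$: $t^*=\lceil1/\bar q-\varepsilon/(1-\varepsilon)\rceil$ (integer argument assumed), $p_t=\frac{\bar q}{1-\varepsilon}(1-t\bar q)^{-1}$ for $0\le t<t^*-1$, else $1$; if $X_t\in\mathcal N(D)$ and $T_{IH}>t$, Goal-Attempt with probability $p_{L(t)}$, else Random-Step; otherwise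 Random-Step. *)

theory Defs
  imports "HOL-Probability.Probability"
begin

definition graph_conn :: "'v set \<Rightarrow> ('v \<Rightarrow> 'v set) \<Rightarrow> bool" where
  "graph_conn V N \<longleftrightarrow> finite V
     \<and> (\<forall>v\<in>V. N v \<subseteq> V)
     \<and> (\<forall>u\<in>V. \<forall>v\<in>V. v \<in> N u \<longleftrightarrow> u \<in> N v)
     \<and> (\<forall>v\<in>V. v \<notin> N v)
     \<and> (\<forall>u\<in>V. \<forall>v\<in>V. (u, v) \<in> {(a, b). b \<in> N a}\<^sup>*)"

definition min_degree :: "'v set \<Rightarrow> ('v \<Rightarrow> 'v set) \<Rightarrow> nat" where
  "min_degree V N = Min ((\<lambda>v. card (N v)) ` V)"

definition wf_tstar :: "real \<Rightarrow> real \<Rightarrow> int" where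
  "wf_tstar q eps = \<lceil>1 / q - eps / (1 - eps)\<rceil>"

text \<open>Water-filling attempt probabilities p_t. For q = 0 we have t* = infinity and p_t = 0.\<close>
definition wf_p :: "real \<Rightarrow> real \<Rightarrow> nat \<Rightarrow> real" where
  "wf_p q eps t = (if q = 0 then 0
     else if real t < real_of_int (wf_tstar q eps) - 1
          then q / (1 - eps) * inverse (1 - real t * q) else 1)"

text \<open>One step from vertex x with visit count L = L(t): returns the next vertex X_{t+1}
  and whether the step was a Goal-Attempt with B_t = 1.\<close>
definition wf_step :: "('v \<Rightarrow> 'v set) \<Rightarrow> real \<Rightarrow> real \<Rightarrow> 'v \<Rightarrow> nat \<Rightarrow> 'v \<Rightarrow> ('v \<times> bool) pmf" where
  "wf_step N eps q D L x =
     bind_pmf (if x \<in> N D then bernoulli_pmf (wf_p q eps L) else return_pmf False) (\<lambda>ga.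
     bind_pmf (bernoulli_pmf (1 - eps)) (\<lambda>B.
       if ga then
         (if B then return_pmf (D, True) else map_pmf (\<lambda>y. (y, False)) (pmf_of_set (N x)))
       else
         bind_pmf (pmf_of_set (N x)) (\<lambda>a.
           if B then return_pmf (a, False) else map_pmf (\<lambda>y. (y, False)) (pmf_of_set (N x)))))"

text \<open>wf_run N eps q D m x L: distribution of the indicator of the event T_IH \<noteq> T, when m steps
  remain before the horizon, the current vertex is x (not yet at the goal after time 0) and the
  current count is L. If the horizon is exhausted, truncation forces a successful step into D,
  so T_IH = T = K+1.\<close>
fun wf_run :: "('v \<Rightarrow> 'v set) \<Rightarrow> real \<Rightarrow> real \<Rightarrow> 'v \<Rightarrow> nat \<Rightarrow> 'v \<Rightarrow> nat \<Rightarrow> bool pmf" where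
  "wf_run N eps q D 0 x L = return_pmf False"
| "wf_run N eps q D (Suc m) x L =
     bind_pmf (wf_step N eps q D L x) (\<lambda>(y, s).
       if y = D then return_pmf (\<not> s)
       else wf_run N eps q D m y (L + (if y \<in> N D then 1 else 0)))"

definition wf_fail_prob :: "'v set \<Rightarrow> ('v \<Rightarrow> 'v set) \<Rightarrow> 'v \<Rightarrow> real \<Rightarrow> real \<Rightarrow> nat \<Rightarrow> real" where
  "wf_fail_prob V N x0 eps q K =
     pmf (bind_pmf (pmf_of_set V)
            (\<lambda>D. wf_run N eps q D K x0 (if x0 \<in> N D then 1 else 0))) True"

end

theory Submission
  imports Defs
begin


lemma integrable_pmf_bounded:
  fixes f :: "'a \<Rightarrow> real"
  assumes "\<And>x. \<bar>f x\<bar> \<le> B"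
  shows "integrable (measure_pmf M) f"
  by (rule measure_pmf.integrable_const_bound[where B=B]) (use assms in auto)

lemma bind_le:
  assumes "\<And>x. x \<in> set_pmf M \<Longrightarrow> pmf (f x) i \<le> c"
  shows "pmf (bind_pmf M f) i \<le> c"
proof -
  have "pmf (bind_pmf M f) i = (\<integral>x. pmf (f x) i \<partial>measure_pmf M)" by (rule pmf_bind)
  also have "\<dots> \<le> (\<integral>x. c \<partial>measure_pmf M)"
    apply (rule integral_mono_AE)
      apply (rule integrable_pmf_bounded[where B=1]) 
      apply (simp add: pmf_le_1)
     apply simp
    using assms by (simp add: AE_measure_pmf_iff)
  also have "\<dots> = c" by simp
  finally show ?thesis .
qed

lemma bind_le2:
  fixes g :: real
  assumes "\<And>z. z \<in> set_pmf M \<Longrightarrow> pmf (F z) True \<le> g + (1 - g) * (if E z then 1 else 0)"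
    and "0 \<le> g" "g \<le> 1"
  shows "pmf (bind_pmf M F) True \<le> g + (1 - g) * pmf (map_pmf E M) True"
proof -
  have "pmf (bind_pmf M F) True = (\<integral>x. pmf (F x) True \<partial>measure_pmf M)" by (rule pmf_bind)
  also have "\<dots> \<le> (\<integral>x. g + (1 - g) * indicator {z. E z} x \<partial>measure_pmf M)"
  proof (rule integral_mono_AE)
    show "integrable (measure_pmf M) (\<lambda>x. pmf (F x) True)"
      by (rule integrable_pmf_bounded[where B=1]) (simp add: pmf_le_1)
    show "integrable (measure_pmf M) (\<lambda>x. g + (1 - g) * indicator {z. E z} x)"
      by (rule integrable_pmf_bounded[where B="\<bar>g\<bar> + \<bar>1-g\<bar>"]) (auto simp: indicator_def)
    have "\<forall>x\<in>set_pmf M. pmf (F x) True \<le> g + (1 - g) * indicator {z. E z} x"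
    proof
      fix x assume "x \<in> set_pmf M"
      from assms(1)[OF this] show "pmf (F x) True \<le> g + (1 - g) * indicator {z. E z} x"
        by (cases "E x") (auto simp: indicator_def)
    qed
    then show "AE x in measure_pmf M. pmf (F x) True \<le> g + (1 - g) * indicator {z. E z} x"
      by (simp add: AE_measure_pmf_iff)
  qed
  also have "\<dots> = (\<integral>x. g \<partial>measure_pmf M) + (\<integral>x. (1 - g) * indicator {z. E z} x \<partial>measure_pmf M)"
    using assms(2,3) by (intro Bochner_Integration.integral_add integrable_pmf_bounded[where B=1]) (auto simp: indicator_def)
  also have "\<dots> = g + (1 - g) * measure (measure_pmf M) {z. E z}"
    by (simp add: integral_indicator measure_pmf.emeasure_eq_measure)
  also have "measure (measure_pmf M) {z. E z} = pmf (map_pmf E M) True"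
    by (simp add: pmf_map vimage_def)
  finally show ?thesis .
qed



lemma unif_hit:
  assumes "finite S" "S \<noteq> {}"
  shows "pmf (map_pmf (\<lambda>y. y = D) (pmf_of_set S)) True \<le> 1 / real (card S)"
proof -
  have "pmf (map_pmf (\<lambda>y. y = D) (pmf_of_set S)) True = measure (measure_pmf (pmf_of_set S)) {D}"
    by (simp add: pmf_map vimage_def)
  also have "\<dots> = real (card (S \<inter> {D})) / real (card S)"
    using assms by (simp add: measure_pmf_of_set)
  also have "\<dots> \<le> 1 / real (card S)"
  proof -
    have "card (S \<inter> {D}) \<le> 1" by (metis card_mono finite.intros inf_le2 is_singletonI is_singleton_altdef finite_insert card.empty card_insert_disjoint empty_iff)
    then show ?thesis by (simp add: divide_right_mono)
  qed
  finally show ?thesis .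
qed

lemma step_bad:
  assumes "finite (N x)" "N x \<noteq> {}"
  shows "pmf (map_pmf (\<lambda>(y, s). y = D \<and> \<not> s) (wf_step N eps q D L x)) True \<le> 1 / real (card (N x))"
  unfolding wf_step_def map_bind_pmf
proof (intro bind_le)
  fix ga B
  have U: "pmf (map_pmf (\<lambda>y. y = D) (pmf_of_set (N x))) True \<le> 1 / real (card (N x))"
    using unif_hit[OF assms] .
  have P: "0 \<le> 1 / real (card (N x))" by simp
  show "pmf (map_pmf (\<lambda>(y, s). y = D \<and> \<not> s)
           (if ga then if B then return_pmf (D, True) else map_pmf (\<lambda>y. (y, False)) (pmf_of_set (N x))
            else pmf_of_set (N x) \<bind>
                 (\<lambda>a. if B then return_pmf (a, False) else map_pmf (\<lambda>y. (y, False)) (pmf_of_set (N x)))))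
        True \<le> 1 / real (card (N x))"
  proof (cases ga; cases B)
    assume "ga" "B" then show ?thesis using P by simp
  next
    assume "ga" "\<not> B" then show ?thesis using U by (simp add: pmf.map_comp o_def)
  next
    assume "\<not> ga" "B" then show ?thesis using U
      by (simp add: map_pmf_def[symmetric] pmf.map_comp o_def)
  next
    assume "\<not> ga" "\<not> B" then show ?thesis using U by (simp add: pmf.map_comp o_def)
  qed
qed

lemma step_support:
  assumes "finite (N x)" "N x \<noteq> {}" "(y, s) \<in> set_pmf (wf_step N eps q D L x)" "y \<noteq> D"
  shows "y \<in> N x"
  using assms unfolding wf_step_def
  by (auto simp: set_bind_pmf split: if_splits)

lemma run_bound:
  assumes sub: "\<forall>v\<in>V. N v \<subseteq> V" and fin: "finite V" and ne: "\<forall>v\<in>V. N v \<noteq> {}"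
    and deg: "\<forall>v\<in>V. real (card (N v)) \<ge> d" and d1: "d \<ge> 1"
  shows "x \<in> V \<Longrightarrow> pmf (wf_run N eps q D m x L) True \<le> 1 - (1 - 1 / d) ^ m"
proof (induction m arbitrary: x L)
  case 0
  then show ?case by simp
next
  case (Suc m)
  define g where "g = 1 - (1 - 1 / d) ^ m"
  have dd: "0 \<le> 1 - 1 / d" "1 - 1 / d \<le> 1" using d1 by auto
  have g0: "0 \<le> g" unfolding g_def using dd by (simp add: power_le_one)
  have g1: "g \<le> 1" unfolding g_def using dd by simp
  have finx: "finite (N x)" using sub fin Suc.prems finite_subset by blast
  have nex: "N x \<noteq> {}" using ne Suc.prems by blast
  have "pmf (wf_run N eps q D (Suc m) x L) True \<le> g + (1 - g) *
      pmf (map_pmf (\<lambda>(y, s). y = D \<and> \<not> s) (wf_step N eps q D L x)) True"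
    unfolding wf_run.simps
  proof (rule bind_le2[OF _ g0 g1])
    fix z assume z: "z \<in> set_pmf (wf_step N eps q D L x)"
    obtain y s where yz: "z = (y, s)" by force
    show "pmf (case z of (y, s) \<Rightarrow> if y = D then return_pmf (\<not> s)
             else wf_run N eps q D m y (L + (if y \<in> N D then 1 else 0))) True
          \<le> g + (1 - g) * (if (case z of (y, s) \<Rightarrow> y = D \<and> \<not> s) then 1 else 0)"
    proof (cases "y = D")
      case True
      then show ?thesis using yz g0 g1 by (cases s) auto
    next
      case False
      then have "y \<in> N x" using step_support[of N x, OF finx nex] z yz by blast
      then have "y \<in> V" using sub Suc.prems by blast
      then show ?thesis using yz False Suc.IH[of y] unfolding g_def by simp
    qed
  qed
  also have "\<dots> \<le> g + (1 - g) * (1 / d)"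
  proof -
    have "pmf (map_pmf (\<lambda>(y, s). y = D \<and> \<not> s) (wf_step N eps q D L x)) True \<le> 1 / real (card (N x))"
      by (rule step_bad[of N x, OF finx nex])
    also have "\<dots> \<le> 1 / d" using deg Suc.prems d1 by (intro divide_left_mono) auto
    finally show ?thesis using g1 by (intro add_left_mono mult_left_mono) auto
  qed
  also have "\<dots> = 1 - (1 - 1 / d) ^ Suc m" unfolding g_def by (simp add: algebra_simps)
  finally show ?case .
qed

theorem lemma5:
  fixes V :: "'v set" and N :: "'v \<Rightarrow> 'v set" and x0 :: 'v
    and n K :: nat and eps q :: real
  assumes "graph_conn V N" and "card V = n" and "n \<ge> 2" and "x0 \<in> V"
    and "0 \<le> eps" and "eps < 1" and "0 \<le> q" and "q \<le> 1"
    and "q > 0 \<longrightarrow> 1 / q - eps / (1 - eps) \<in> \<int>"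
  shows "wf_fail_prob V N x0 eps q K \<le> 1 - (1 - 1 / real (min_degree V N)) ^ K"
proof -
  from assms(1) have fin: "finite V" and sub: "\<forall>v\<in>V. N v \<subseteq> V"
    and conn: "\<forall>u\<in>V. \<forall>v\<in>V. (u, v) \<in> {(a, b). b \<in> N a}\<^sup>*"
    unfolding graph_conn_def by auto
  have Vne: "V \<noteq> {}" using assms(4) by blast
  have ne: "\<forall>v\<in>V. N v \<noteq> {}"
  proof
    fix v assume v: "v \<in> V"
    have "\<not> V \<subseteq> {v}"
    proof
      assume "V \<subseteq> {v}"
      then have "card V \<le> 1" using card_mono[of "{v}" V] by simp
      then show False using assms(2,3) by simp
    qed
    then obtain u where u: "u \<in> V" "u \<noteq> v" by blast
    have "(v, u) \<in> {(a, b). b \<in> N a}\<^sup>*" using conn v u by blast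
    then show "N v \<noteq> {}" using u(2)
      by (cases rule: converse_rtranclE) auto
  qed
  define d where "d = real (min_degree V N)"
  have deg: "\<forall>v\<in>V. real (card (N v)) \<ge> d"
    unfolding d_def min_degree_def using fin by auto
  have "min_degree V N \<in> (\<lambda>v. card (N v)) ` V"
    unfolding min_degree_def using fin Vne by (intro Min_in) auto
  then obtain v where v: "v \<in> V" "min_degree V N = card (N v)" by blast
  have "card (N v) \<noteq> 0" using ne v(1) sub fin finite_subset by (metis card_0_eq)
  then have d1: "d \<ge> 1" unfolding d_def using v(2) by simp
  show ?thesis
    unfolding wf_fail_prob_def d_def[symmetric]
  proof (rule bind_le)
    fix D assume "D \<in> set_pmf (pmf_of_set V)"
    show "pmf (wf_run N eps q D K x0 (if x0 \<in> N D then 1 else 0)) True \<le> 1 - (1 - 1 / d) ^ K"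
      by (rule run_bound[OF sub fin ne deg d1 assms(4)])
  qed
qed

end
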